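(* Let $q>1$ and $0<u<1$, and let $x=(u/q,u/q^2,\dots)$, $y=(1,1/q,1/q^2,\dots)$, $t=1/q$. For $N\ge0$ and a partition $\lambda$: $P^N_{x,y,0,t}(\lambda)=0$ if $\lambda$ has more than $N$ parts, and otherwise $$P^N_{x,y,0,t}(\lambda)=\frac{u^{|\lambda|}\,(u/q)_N\,(1/q)_N}{(1/q)_{N-\lambda'_1}}\prod_{i\ge1}\frac{1}{q^{(\lambda'_i)^2}(1/q)_{m_i(\lambda)}}.$$
   Context: $(a)_N=(1-a)(1-a/q)\cdots(1-a/q^{N-1})$, $(a)_0=1$. $\lambda'$ is the conjugate partition ($\lambda'_1$ = number of parts), $m_i(\lambda)$ the number of parts equal to $i$. For a box $s$, $a(s),l(s)$ are arm and leg; $b_\lambda(0,t)=\prod_{s\in\lambda}\frac{1-0^{a(s)}t^{l(s)+1}}{1-0^{a(s)+1}t^{l(s)}}$ ($0^0=1$). $P_\lambda(\cdot;0,t)$ is the Hall–Littlewood polynomial; $\Pi(x,y;0,t)=\prod_{i,j}\frac{1-tx_iy_j}{1-x_iy_j}$. Truncated measure: $P^N_{x,y,0,t}(\lambda)=\frac{P_\lambda(x_1,\dots,x_N,0,\dots;0,t)P_\lambda(y;0,t)b_\lambda(0,t)}{\Pi((x_1,\dots,x_N,0,\dots),y;0,t)}$ for $\lambda$ with at most $N$ parts, $0$ otherwise. *)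

theory Defs
  imports "HOL-Analysis.Analysis" "HOL-Combinatorics.Permutations"
begin

definition is_partition :: "nat list \<Rightarrow> bool" where
  "is_partition lam \<longleftrightarrow> sorted (rev lam) \<and> 0 \<notin> set lam"

(* i-th part, 0-indexed, padded with zeros *)
definition part :: "nat list \<Rightarrow> nat \<Rightarrow> nat" where
  "part lam i = (if i < length lam then lam ! i else 0)"

(* conjugate partition, 1-indexed: conj lam i = \<lambda>'_i = #{parts \<ge> i} *)
definition conj_part :: "nat list \<Rightarrow> nat \<Rightarrow> nat" where
  "conj_part lam i = length (filter (\<lambda>k. i \<le> k) lam)"

definition mult :: "nat list \<Rightarrow> nat \<Rightarrow> nat" where
  "mult lam i = count_list lam i"

definition qpoch :: "real \<Rightarrow> real \<Rightarrow> nat \<Rightarrow> real" where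
  "qpoch q a N = (\<Prod>k<N. 1 - a / q ^ k)"

definition vm :: "real \<Rightarrow> nat \<Rightarrow> real" where
  "vm t m = (\<Prod>j\<in>{1..m}. (1 - t ^ j) / (1 - t))"

(* v_lambda(t) in n variables: m_0 = n - length lam *)
definition vlam :: "nat \<Rightarrow> real \<Rightarrow> nat list \<Rightarrow> real" where
  "vlam n t lam = vm t (n - length lam) * (\<Prod>i\<in>set lam. vm t (mult lam i))"

(* Hall-Littlewood polynomial P_lambda(x_1,...,x_n;0,t) (Macdonald III.(2.2)),
   evaluated at x 0, ..., x (n-1), via the symmetrization formula;
   zero if lam has more than n parts.  (Meaningful at points with distinct
   coordinates, which is all that is used below.) *)
definition HL_P :: "nat \<Rightarrow> real \<Rightarrow> nat list \<Rightarrow> (nat \<Rightarrow> real) \<Rightarrow> real" where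
  "HL_P n t lam x =
     (if length lam > n then 0 else
      (1 / vlam n t lam) *
      (\<Sum>\<sigma>\<in>{\<sigma>. \<sigma> permutes {..<n}}.
         (\<Prod>i<n. x (\<sigma> i) ^ part lam i) *
         (\<Prod>i<n. \<Prod>j\<in>{i<..<n}.
             (x (\<sigma> i) - t * x (\<sigma> j)) / (x (\<sigma> i) - x (\<sigma> j)))))"

definition HL_P_inf :: "real \<Rightarrow> nat list \<Rightarrow> (nat \<Rightarrow> real) \<Rightarrow> real" where
  "HL_P_inf t lam y = lim (\<lambda>n. HL_P n t lam y)"

(* b_lambda(0,t); boxes (i,j) 0-indexed with j < lam_i;
   arm = lam_i - j - 1, leg = lam'_{j+1} - i - 1; 0^0 = 1 *)
definition b_lam :: "real \<Rightarrow> nat list \<Rightarrow> real" where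
  "b_lam t lam =
     (\<Prod>i<length lam. \<Prod>j<lam ! i.
        let a = lam ! i - j - 1; l = conj_part lam (j + 1) - i - 1 in
        (1 - (0::real) ^ a * t ^ (l + 1)) / (1 - (0::real) ^ (a + 1) * t ^ l))"

definition cauchy_Pi :: "real \<Rightarrow> (nat \<Rightarrow> real) \<Rightarrow> (nat \<Rightarrow> real) \<Rightarrow> real" where
  "cauchy_Pi t x y = lim (\<lambda>n. \<Prod>i<n. \<Prod>j<n. (1 - t * x i * y j) / (1 - x i * y j))"

definition trunc_seq :: "nat \<Rightarrow> (nat \<Rightarrow> real) \<Rightarrow> nat \<Rightarrow> real" where
  "trunc_seq N x i = (if i < N then x i else 0)"

(* Truncated measure P^N_{x,y,0,t}(lambda).  P_lambda(x_1,..,x_N,0,...) is the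
   N-variable Hall-Littlewood polynomial (stability). *)
definition HL_measure :: "nat \<Rightarrow> (nat \<Rightarrow> real) \<Rightarrow> (nat \<Rightarrow> real) \<Rightarrow> real \<Rightarrow> nat list \<Rightarrow> real" where
  "HL_measure N x y t lam =
     (if length lam \<le> N then
        HL_P N t lam x * HL_P_inf t lam y * b_lam t lam / cauchy_Pi t (trunc_seq N x) y
      else 0)"

end

theory Submission
  imports Defs
begin


lemma perm_nonid_witness:
  assumes sp: "\<sigma> permutes {..<n}" and ne: "\<sigma> \<noteq> id"
  shows "\<exists>i j. i < j \<and> j < n \<and> \<sigma> i = Suc (\<sigma> j)"
proof (rule ccontr)
  assume H: "\<not> ?thesis"
  define p where "p = inv \<sigma>"
  have pp: "p permutes {..<n}" using sp unfolding p_def by (rule permutes_inv)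
  have sp_p: "\<And>k. \<sigma> (p k) = k" unfolding p_def using permutes_inverses(1)[OF sp] by simp
  have step: "p k < p (Suc k)" if "Suc k < n" for k
  proof -
    have "p k \<noteq> p (Suc k)" using sp_p by (metis n_not_Suc_n)
    moreover have "\<not> p (Suc k) < p k"
    proof
      assume "p (Suc k) < p k"
      moreover have "p k \<in> {..<n}" using permutes_in_image[OF pp] that by simp
      then have "p k < n" by simp
      ultimately show False using H sp_p by metis
    qed
    ultimately show ?thesis by linarith
  qed
  have low: "k \<le> p k" if "k < n" for k
    using that
  proof (induction k)
    case 0 then show ?case by simp
  next
    case (Suc k) then show ?case using step[of k] by simp
  qed
  have mono: "k \<le> m \<Longrightarrow> m < n \<Longrightarrow> p k + (m - k) \<le> p m" for k m
  proof (induction m)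
    case 0 then show ?case by simp
  next
    case (Suc m)
    show ?case
    proof (cases "k \<le> m")
      case True
      then have "p k + (m - k) \<le> p m" using Suc by simp
      moreover have "p m < p (Suc m)" using step Suc.prems by simp
      ultimately show ?thesis using True by linarith
    next
      case False
      then have "k = Suc m" using Suc.prems by simp
      then show ?thesis by simp
    qed
  qed
  have "p k = k" for k
  proof (cases "k < n")
    case True
    have n0: "n - 1 < n" using True by simp
    have "p (n - 1) \<in> {..<n}" using permutes_in_image[OF pp] n0 by simp
    moreover have "p k + (n - 1 - k) \<le> p (n - 1)" using mono[of k "n-1"] True by simp
    ultimately show ?thesis using low[OF True] True by simp
  next
    case False then show ?thesis using permutes_not_in[OF pp] by simp
  qed
  then have "p = id" by auto
  then have "\<sigma> = id" unfolding p_def using sp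
    by (metis inv_id permutes_inv_inv)
  with ne show False by simp
qed



lemma HL_P_geom:
  assumes geo: "\<And>k. x (Suc k) = t * x k" and len: "length lam \<le> n"
  shows "HL_P n t lam x = (1 / vlam n t lam) *
     ((\<Prod>i<n. x i ^ part lam i) *
      (\<Prod>i<n. \<Prod>j\<in>{i<..<n}. (x i - t * x j) / (x i - x j)))"
proof -
  let ?S = "{\<sigma>. \<sigma> permutes {..<n}}"
  let ?f = "\<lambda>\<sigma>. (\<Prod>i<n. x (\<sigma> i) ^ part lam i) *
         (\<Prod>i<n. \<Prod>j\<in>{i<..<n}.
             (x (\<sigma> i) - t * x (\<sigma> j)) / (x (\<sigma> i) - x (\<sigma> j)))"
  have z: "?f \<sigma> = 0" if "\<sigma> \<in> ?S - {id}" for \<sigma>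
  proof -
    from that have sp: "\<sigma> permutes {..<n}" and ne: "\<sigma> \<noteq> id" by auto
    obtain i j where ij: "i < j" "j < n" "\<sigma> i = Suc (\<sigma> j)"
      using perm_nonid_witness[OF sp ne] by blast
    have "(x (\<sigma> i) - t * x (\<sigma> j)) / (x (\<sigma> i) - x (\<sigma> j)) = 0"
      using ij geo by simp
    then have "(\<Prod>j\<in>{i<..<n}. (x (\<sigma> i) - t * x (\<sigma> j)) / (x (\<sigma> i) - x (\<sigma> j))) = 0"
      using ij by (intro prod_zero) (simp, rule bexI[of _ j], auto)
    then have "(\<Prod>i<n. \<Prod>j\<in>{i<..<n}.
             (x (\<sigma> i) - t * x (\<sigma> j)) / (x (\<sigma> i) - x (\<sigma> j))) = 0"
      using ij by (intro prod_zero) (simp, rule bexI[of _ i], auto)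
    then show ?thesis by simp
  qed
  have fin: "finite ?S" by (rule finite_permutations) simp
  have z2: "sum ?f (?S - {id}) = 0" using z by (intro sum.neutral) blast
  have "sum ?f ?S = ?f id + sum ?f (?S - {id})"
    using permutes_id[of "{..<n}"] by (intro sum.remove[OF fin]) (simp only: mem_Collect_eq)
  then have "sum ?f ?S = ?f id" using z2 by simp
  then show ?thesis using len unfolding HL_P_def by simp
qed



lemma telescope_lt:
  fixes h :: "nat \<Rightarrow> real"
  assumes "\<And>i. i \<le> n \<Longrightarrow> h i \<noteq> 0"
  shows "(\<Prod>i<n. h i / h (Suc i)) = h 0 / h n"
  using assms by (induction n) auto

lemma vm_Suc: "vm t (Suc n) = vm t n * ((1 - t ^ Suc n) / (1 - t))"
  unfolding vm_def by (simp add: prod.cl_ivl_Suc)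

lemma geom_factor:
  fixes t c :: real
  assumes "i < j" and "c \<noteq> 0" and "t \<noteq> 0"
  shows "(c * t ^ i - t * (c * t ^ j)) / (c * t ^ i - c * t ^ j)
         = (1 - t ^ Suc (j - i)) / (1 - t ^ (j - i))"
proof -
  have j: "t ^ j = t ^ i * t ^ (j - i)" using assms(1) by (simp add: power_add[symmetric])
  have ne: "c * t ^ i \<noteq> 0" using assms by simp
  have "(c * t ^ i - t * (c * t ^ j)) / (c * t ^ i - c * t ^ j)
      = ((c * t ^ i) * (1 - t ^ Suc (j - i))) / ((c * t ^ i) * (1 - t ^ (j - i)))"
    unfolding j by (simp add: algebra_simps)
  also have "\<dots> = (1 - t ^ Suc (j - i)) / (1 - t ^ (j - i))"
    using ne by (rule mult_divide_mult_cancel_left)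
  finally show ?thesis .
qed

lemma G_geom:
  fixes t c :: real
  assumes t0: "0 < t" and t1: "t < 1" and c0: "c \<noteq> 0"
  shows "(\<Prod>i<n. \<Prod>j\<in>{i<..<n}. (c * t ^ i - t * (c * t ^ j)) / (c * t ^ i - c * t ^ j)) = vm t n"
proof (induction n)
  case 0 then show ?case by (simp add: vm_def)
next
  case (Suc n)
  let ?f = "\<lambda>i j. (c * t ^ i - t * (c * t ^ j)) / (c * t ^ i - c * t ^ j)"
  have "(\<Prod>i<Suc n. \<Prod>j\<in>{i<..<Suc n}. ?f i j)
      = (\<Prod>i<n. \<Prod>j\<in>{i<..<Suc n}. ?f i j)"
  proof -
    have e: "{n<..<Suc n} = {}" by auto
    show ?thesis by (simp only: prod.lessThan_Suc e prod.empty mult_1_right)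
  qed
  also have "\<dots> = (\<Prod>i<n. ?f i n * (\<Prod>j\<in>{i<..<n}. ?f i j))"
  proof (rule prod.cong[OF refl])
    fix i assume "i \<in> {..<n}"
    then have "{i<..<Suc n} = insert n {i<..<n}" by auto
    then show "(\<Prod>j\<in>{i<..<Suc n}. ?f i j) = ?f i n * (\<Prod>j\<in>{i<..<n}. ?f i j)"
      by simp
  qed
  also have "\<dots> = (\<Prod>i<n. ?f i n) * vm t n"
    using Suc by (simp only: prod.distrib)
  also have "(\<Prod>i<n. ?f i n) = (\<Prod>i<n. (1 - t ^ (Suc n - i)) / (1 - t ^ (Suc n - Suc i)))"
    by (rule prod.cong[OF refl]) (use geom_factor[OF _ c0, of _ n t] t0 in \<open>simp add: Suc_diff_le\<close>)
  also have "\<dots> = (1 - t ^ (Suc n - 0)) / (1 - t ^ (Suc n - n))"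
  proof (rule telescope_lt[where h = "\<lambda>i. 1 - t ^ (Suc n - i)"])
    fix i assume "i \<le> n"
    then have "0 < Suc n - i" by simp
    then have "t ^ (Suc n - i) < 1" using t0 t1 by (simp add: power_less_one_iff)
    then show "1 - t ^ (Suc n - i) \<noteq> 0" by simp
  qed
  finally show ?case by (simp add: vm_Suc)
qed

definition nl :: "nat list \<Rightarrow> nat" where
  "nl lam = (\<Sum>i<length lam. i * lam ! i)"

lemma mono_geom:
  fixes t c :: real
  assumes "length lam \<le> n"
  shows "(\<Prod>i<n. (c * t ^ i) ^ part lam i) = c ^ sum_list lam * t ^ nl lam"
proof -
  have "(\<Prod>i<n. (c * t ^ i) ^ part lam i) = (\<Prod>i<length lam. (c * t ^ i) ^ part lam i)"
    using assms by (intro prod.mono_neutral_right) (auto simp: part_def)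
  also have "\<dots> = (\<Prod>i<length lam. c ^ (lam ! i) * t ^ (i * lam ! i))"
    by (rule prod.cong[OF refl]) (simp add: part_def power_mult_distrib power_mult)
  also have "\<dots> = c ^ (\<Sum>i<length lam. lam ! i) * t ^ nl lam"
    by (simp add: prod.distrib power_sum nl_def)
  also have "(\<Sum>i<length lam. lam ! i) = sum_list lam"
    by (simp add: sum_list_sum_nth atLeast0LessThan)
  finally show ?thesis .
qed

lemma HL_P_geom2:
  fixes t c :: real
  assumes t0: "0 < t" and t1: "t < 1" and xd: "\<And>k. x k = c * t ^ k"
    and len: "length lam \<le> n" and c0: "c \<noteq> 0"
  shows "HL_P n t lam x = c ^ sum_list lam * t ^ nl lam * vm t n / vlam n t lam"
proof -
  have geo: "\<And>k. x (Suc k) = t * x k" using xd by simp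
  have x: "x = (\<lambda>k. c * t ^ k)" using xd by auto
  show ?thesis
    unfolding HL_P_geom[of x t lam n, OF geo len] unfolding x
    using mono_geom[OF len, of c t] G_geom[OF t0 t1 c0, of n] by simp
qed



definition Qt :: "real \<Rightarrow> nat \<Rightarrow> real" where
  "Qt t m = (\<Prod>j\<in>{1..m}. 1 - t ^ j)"

lemma Qt_Suc: "Qt t (Suc m) = Qt t m * (1 - t ^ Suc m)"
  unfolding Qt_def by (simp add: prod.cl_ivl_Suc)

lemma count_prod:
  fixes t :: real
  assumes "finite A" "set xs \<subseteq> A"
  shows "(\<Prod>i<length xs. 1 - t ^ count_list (drop i xs) (xs ! i))
         = (\<Prod>k\<in>A. Qt t (count_list xs k))"
  using assms(2)
proof (induction xs)
  case Nil then show ?case by (simp add: Qt_def)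
next
  case (Cons x xs)
  have xA: "x \<in> A" using Cons.prems by simp
  have "(\<Prod>i<length (x # xs). 1 - t ^ count_list (drop i (x # xs)) ((x # xs) ! i))
     = (1 - t ^ Suc (count_list xs x)) * (\<Prod>i<length xs. 1 - t ^ count_list (drop i xs) (xs ! i))"
    by (simp add: prod.lessThan_Suc_shift del: prod.lessThan_Suc)
  also have "\<dots> = (1 - t ^ Suc (count_list xs x)) * (\<Prod>k\<in>A. Qt t (count_list xs k))"
    using Cons by simp
  also have "(\<Prod>k\<in>A. Qt t (count_list xs k)) = Qt t (count_list xs x) * (\<Prod>k\<in>A - {x}. Qt t (count_list xs k))"
    using assms(1) xA by (rule prod.remove)
  also have "(\<Prod>k\<in>A - {x}. Qt t (count_list xs k)) = (\<Prod>k\<in>A - {x}. Qt t (count_list (x # xs) k))"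
    by (rule prod.cong) auto
  also have "(1 - t ^ Suc (count_list xs x)) * (Qt t (count_list xs x) * (\<Prod>k\<in>A - {x}. Qt t (count_list (x # xs) k)))
      = Qt t (count_list (x # xs) x) * (\<Prod>k\<in>A - {x}. Qt t (count_list (x # xs) k))"
    by (simp add: Qt_Suc)
  also have "\<dots> = (\<Prod>k\<in>A. Qt t (count_list (x # xs) k))"
    using assms(1) xA by (rule prod.remove[symmetric])
  finally show ?case .
qed

lemma conj_nth:
  assumes s: "sorted (rev lam)" and i: "i < length lam"
  shows "conj_part lam (lam ! i) = i + count_list (drop i lam) (lam ! i)"
proof -
  have tk: "\<forall>x\<in>set (take i lam). lam ! i \<le> x"
  proof
    fix x assume "x \<in> set (take i lam)"
    then obtain k where "k < length (take i lam)" "x = take i lam ! k" by (auto simp: in_set_conv_nth)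
    then show "lam ! i \<le> x" using sorted_rev_nth_mono[OF s, of k i] i by simp
  qed
  have dr: "\<forall>x\<in>set (drop i lam). x \<le> lam ! i"
  proof
    fix x assume "x \<in> set (drop i lam)"
    then obtain k where "k < length (drop i lam)" "x = drop i lam ! k" by (auto simp: in_set_conv_nth)
    then show "x \<le> lam ! i" using sorted_rev_nth_mono[OF s, of i "i + k"] i by simp
  qed
  have "conj_part lam (lam ! i) = length (filter (\<lambda>k. lam ! i \<le> k) (take i lam @ drop i lam))"
    unfolding conj_part_def by simp
  also have "\<dots> = length (filter (\<lambda>k. lam ! i \<le> k) (take i lam)) + length (filter (\<lambda>k. lam ! i \<le> k) (drop i lam))"
    by (simp only: filter_append length_append)
  also have "filter (\<lambda>k. lam ! i \<le> k) (take i lam) = take i lam"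
    using tk by simp
  also have "filter (\<lambda>k. lam ! i \<le> k) (drop i lam) = filter ((=) (lam ! i)) (drop i lam)"
    using dr by (intro filter_cong) auto
  finally show ?thesis using i by (simp add: count_list_eq_length_filter)
qed

lemma b_lam_eq:
  fixes t :: real
  assumes p: "is_partition lam"
  shows "b_lam t lam = (\<Prod>i<length lam. 1 - t ^ count_list (drop i lam) (lam ! i))"
  unfolding b_lam_def
proof (rule prod.cong[OF refl])
  fix i assume "i \<in> {..<length lam}"
  then have i: "i < length lam" by simp
  have s: "sorted (rev lam)" and nz: "0 \<notin> set lam" using p by (auto simp: is_partition_def)
  have "lam ! i \<in> set lam" using i by simp
  then have pos: "lam ! i \<noteq> 0" using nz by metis
  then obtain m where m: "lam ! i = Suc m" by (cases "lam ! i") auto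
  have cnt: "count_list (drop i lam) (lam ! i) \<ge> 1"
  proof -
    have "lam ! i \<in> set (drop i lam)" using i by (simp add: in_set_conv_nth) (metis add_0 diff_add_inverse gr_zeroI i less_diff_conv nth_drop add.commute)
    then show ?thesis using count_list_0_iff[of "drop i lam" "lam ! i"] by simp
  qed
  have cj: "conj_part lam (lam ! i) = i + count_list (drop i lam) (lam ! i)"
    by (rule conj_nth[OF s i])
  let ?F = "\<lambda>j. let a = lam ! i - j - 1; l = conj_part lam (j + 1) - i - 1 in
        (1 - (0::real) ^ a * t ^ (l + 1)) / (1 - (0::real) ^ (a + 1) * t ^ l)"
  have one: "?F j = 1" if "j < m" for j
  proof -
    have "lam ! i - j - 1 > 0" using that m by simp
    then show ?thesis by (simp add: Let_def zero_power)
  qed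
  have last: "?F m = 1 - t ^ count_list (drop i lam) (lam ! i)"
  proof -
    have "conj_part lam (m + 1) - i - 1 + 1 = count_list (drop i lam) (lam ! i)"
      using cj cnt m by simp
    then show ?thesis using m by (simp add: Let_def del: power_Suc add: power_Suc[symmetric])
  qed
  have "(\<Prod>j<lam ! i. ?F j) = (\<Prod>j<m. ?F j) * ?F m" unfolding m by simp
  also have "(\<Prod>j<m. ?F j) = 1" using one by (intro prod.neutral) blast
  finally show "(\<Prod>j<lam ! i. ?F j) = 1 - t ^ count_list (drop i lam) (lam ! i)" using last by simp
qed

lemma conj_append:
  "conj_part (xs @ [p]) i = conj_part xs i + (if i \<le> p then 1 else 0)"
  unfolding conj_part_def by simp

lemma nl_append: "nl (xs @ [p]) = nl xs + length xs * p"
  unfolding nl_def by (simp add: nth_append)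

lemma conj_sq:
  assumes "sorted (rev lam)" "\<forall>x\<in>set lam. x \<le> S"
  shows "(\<Sum>i\<in>{1..S}. conj_part lam i ^ 2) = sum_list lam + 2 * nl lam"
  using assms
proof (induction lam rule: rev_induct)
  case Nil then show ?case by (simp add: conj_part_def nl_def)
next
  case (snoc p xs)
  have s: "sorted (rev xs)" and pmin: "\<forall>x\<in>set xs. p \<le> x" using snoc.prems by (auto simp: sorted_append)
  have pS: "p \<le> S" using snoc.prems by simp
  have cl: "conj_part xs i = length xs" if "i \<le> p" for i
    unfolding conj_part_def using pmin that by (subst filter_True) auto
  have "(\<Sum>i\<in>{1..S}. conj_part (xs @ [p]) i ^ 2)
      = (\<Sum>i\<in>{1..S}. conj_part xs i ^ 2 + (if i \<le> p then 2 * length xs + 1 else 0))"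
    by (rule sum.cong[OF refl]) (auto simp: conj_append cl power2_eq_square)
  also have "\<dots> = (\<Sum>i\<in>{1..S}. conj_part xs i ^ 2) + (\<Sum>i\<in>{1..S}. (if i \<le> p then 2 * length xs + 1 else 0))"
    by (rule sum.distrib)
  also have "(\<Sum>i\<in>{1..S}. (if i \<le> p then 2 * length xs + 1 else 0)) = (\<Sum>i\<in>{i\<in>{1..S}. i \<le> p}. 2 * length xs + 1)"
    by (rule sum.inter_filter[symmetric]) simp
  also have "{i\<in>{1..S}. i \<le> p} = {1..p}" using pS by auto
  also have "(\<Sum>i\<in>{1..S}. conj_part xs i ^ 2) = sum_list xs + 2 * nl xs"
    using snoc s by simp
  finally show ?case by (simp add: nl_append algebra_simps)
qed



lemma vm_pos: fixes t :: real assumes "0 < t" "t < 1" shows "vm t m > 0"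
  unfolding vm_def using assms by (intro prod_pos) (auto simp: power_less_one_iff)

lemma vm_add: "vm t (n + l) = vm t n * (\<Prod>k<l. (1 - t ^ (n + k + 1)) / (1 - t))"
  by (induction l) (simp_all add: vm_Suc)

lemma geo_tend: fixes t :: real assumes "0 < t" "t < 1"
  shows "(\<lambda>n. t ^ (n + k)) \<longlonglongrightarrow> 0"
proof -
  have "(\<lambda>n. t ^ k * t ^ n) \<longlonglongrightarrow> t ^ k * 0"
    using assms by (intro tendsto_mult tendsto_const LIMSEQ_power_zero) simp
  then show ?thesis by (simp add: power_add mult.commute)
qed

lemma HL_P_inf_geom:
  fixes t :: real
  assumes t0: "0 < t" and t1: "t < 1" and yd: "\<And>k. y k = t ^ k"
  shows "HL_P_inf t lam y = t ^ nl lam / ((1 - t) ^ length lam * (\<Prod>i\<in>set lam. vm t (mult lam i)))"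
proof -
  let ?l = "length lam"
  let ?V = "\<Prod>i\<in>set lam. vm t (mult lam i)"
  have yd': "\<And>k. y k = 1 * t ^ k" using yd by simp
  have Vp: "?V > 0" by (rule prod_pos) (use vm_pos[OF t0 t1] in auto)
  have eq: "HL_P (n + ?l) t lam y = t ^ nl lam * (\<Prod>k<?l. (1 - t ^ (n + k + 1)) / (1 - t)) / ?V" for n
  proof -
    have "HL_P (n + ?l) t lam y = 1 ^ sum_list lam * t ^ nl lam * vm t (n + ?l) / vlam (n + ?l) t lam"
      by (rule HL_P_geom2[OF t0 t1 yd']) simp_all
    also have "\<dots> = t ^ nl lam * (vm t n * (\<Prod>k<?l. (1 - t ^ (n + k + 1)) / (1 - t))) / (vm t n * ?V)"
      unfolding vlam_def vm_add by simp
    also have "\<dots> = t ^ nl lam * (\<Prod>k<?l. (1 - t ^ (n + k + 1)) / (1 - t)) / ?V"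
      using vm_pos[OF t0 t1, of n] by simp
    finally show ?thesis .
  qed
  have lim: "(\<lambda>n. t ^ nl lam * (\<Prod>k<?l. (1 - t ^ (n + k + 1)) / (1 - t)) / ?V)
      \<longlonglongrightarrow> t ^ nl lam * (\<Prod>k<?l. (1 - 0) / (1 - t)) / ?V"
  proof -
    have "(\<lambda>n. \<Prod>k<?l. (1 - t ^ (n + k + 1)) / (1 - t)) \<longlonglongrightarrow> (\<Prod>k<?l. (1 - 0) / (1 - t))"
    proof (rule tendsto_prod)
      fix k
      have "(\<lambda>n. t ^ (n + (k + 1))) \<longlonglongrightarrow> 0" by (rule geo_tend[OF t0 t1])
      then have "(\<lambda>n. t ^ (n + k + 1)) \<longlonglongrightarrow> 0" by (simp add: add.assoc)
      then show "(\<lambda>n. (1 - t ^ (n + k + 1)) / (1 - t)) \<longlonglongrightarrow> (1 - 0) / (1 - t)"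
        by (intro tendsto_divide tendsto_diff tendsto_const) (use t1 in auto)
    qed
    then show ?thesis by (intro tendsto_divide tendsto_mult tendsto_const) (assumption | metis Vp less_irrefl)+
  qed
  have "(\<lambda>n. HL_P (n + ?l) t lam y) \<longlonglongrightarrow> t ^ nl lam * (\<Prod>k<?l. (1 - 0) / (1 - t)) / ?V"
    unfolding eq using lim by (simp add: add.assoc)
  then have "(\<lambda>n. HL_P n t lam y) \<longlonglongrightarrow> t ^ nl lam * (\<Prod>k<?l. (1 - 0) / (1 - t)) / ?V"
    by (rule LIMSEQ_offset)
  then have "HL_P_inf t lam y = t ^ nl lam * (\<Prod>k<?l. (1 - 0) / (1 - t)) / ?V"
    unfolding HL_P_inf_def by (rule limI)
  then show ?thesis by (simp add: power_one_over)
qed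

lemma cauchy_geom:
  fixes t u :: real
  assumes t0: "0 < t" and t1: "t < 1" and u0: "0 < u" and u1: "u < 1"
  shows "cauchy_Pi t (trunc_seq N (\<lambda>i. u * t ^ (i + 1))) (\<lambda>j. t ^ j)
       = 1 / (\<Prod>i<N. 1 - u * t ^ (i + 1))"
proof -
  let ?x = "trunc_seq N (\<lambda>i. u * t ^ (i + 1))"
  let ?F = "\<lambda>i j. (1 - t * ?x i * t ^ j) / (1 - ?x i * t ^ j)"
  have pos: "1 - u * t ^ k > 0" for k
  proof -
    have "t ^ k \<le> 1" using t0 t1 by (simp add: power_le_one)
    then have "u * t ^ k \<le> u" using u0 by (simp add: mult_left_le)
    then show ?thesis using u1 by simp
  qed
  have inner: "(\<Prod>j<m. ?F i j) = (1 - u * t ^ (i + m + 1)) / (1 - u * t ^ (i + 1))" if "i < N" for i m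
  proof -
    have "(\<Prod>j<m. ?F i j) = (\<Prod>j<m. (1 - u * t ^ (i + Suc j + 1)) / (1 - u * t ^ (i + j + 1)))"
      using that by (intro prod.cong refl) (simp add: trunc_seq_def power_add mult_ac)
    also have "\<dots> = (1 - u * t ^ (i + m + 1)) / (1 - u * t ^ (i + 0 + 1))"
      by (rule prod_lessThan_telescope[where f = "\<lambda>j. 1 - u * t ^ (i + j + 1)"])
         (rule pos[THEN less_imp_neq, THEN not_sym])
    finally show ?thesis by simp
  qed
  have eq: "(\<Prod>i<n + N. \<Prod>j<n + N. ?F i j) = (\<Prod>i<N. (1 - u * t ^ (i + (n + N) + 1)) / (1 - u * t ^ (i + 1)))" for n
  proof -
    have "(\<Prod>i<n + N. \<Prod>j<n + N. ?F i j) = (\<Prod>i<N. \<Prod>j<n + N. ?F i j)"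
      by (intro prod.mono_neutral_right) (auto simp: trunc_seq_def)
    also have "\<dots> = (\<Prod>i<N. (1 - u * t ^ (i + (n + N) + 1)) / (1 - u * t ^ (i + 1)))"
      by (intro prod.cong refl inner) simp
    finally show ?thesis .
  qed
  have lim: "(\<lambda>n. \<Prod>i<N. (1 - u * t ^ (i + (n + N) + 1)) / (1 - u * t ^ (i + 1)))
     \<longlonglongrightarrow> (\<Prod>i<N. (1 - u * 0) / (1 - u * t ^ (i + 1)))"
  proof (intro tendsto_intros)
    fix i
    have "(\<lambda>n. t ^ (n + (i + N + 1))) \<longlonglongrightarrow> 0" by (rule geo_tend[OF t0 t1])
    then show "(\<lambda>n. t ^ (i + (n + N) + 1)) \<longlonglongrightarrow> 0" by (simp add: add_ac)
  next
    fix i show "1 - u * t ^ (i + 1) \<noteq> 0" using pos[of "i+1"] by simp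
  qed
  have "(\<lambda>n. \<Prod>i<n + N. \<Prod>j<n + N. ?F i j) \<longlonglongrightarrow> (\<Prod>i<N. (1 - u * 0) / (1 - u * t ^ (i + 1)))"
    unfolding eq by (rule lim)
  then have "(\<lambda>n. \<Prod>i<n. \<Prod>j<n. ?F i j) \<longlonglongrightarrow> (\<Prod>i<N. (1 - u * 0) / (1 - u * t ^ (i + 1)))"
    by (rule LIMSEQ_offset)
  then have "cauchy_Pi t ?x (\<lambda>j. t ^ j) = (\<Prod>i<N. (1 - u * 0) / (1 - u * t ^ (i + 1)))"
    unfolding cauchy_Pi_def by (rule limI)
  then show ?thesis by (simp add: prod_dividef)
qed



lemma qpoch_Qt: assumes "q \<noteq> 0" shows "qpoch q (1 / q) m = Qt (1 / q) m"
  by (induction m) (simp_all add: qpoch_def Qt_def Qt_Suc prod.cl_ivl_Suc power_one_over)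

lemma Qt_vm: fixes t :: real assumes "t \<noteq> 1" shows "Qt t m = (1 - t) ^ m * vm t m"
  using assms by (induction m) (simp_all add: Qt_def vm_def Qt_Suc vm_Suc)

lemma alg_final:
  fixes u t tP vN W V A PU :: real
  assumes "V \<noteq> 0" "W \<noteq> 0" "A \<noteq> 0" "PU \<noteq> 0"
  shows "(u * t) ^ S * tP * vN / (W * V) * (tP / (A * V)) * (A * V) / (1 / PU)
       = u ^ S * PU * (A * vN / W) * (t ^ S * (tP * tP) / (A * V))"
  using assms by (simp add: field_simps power_mult_distrib)

theorem lemma4:
  fixes q u :: real and N :: nat and lam :: "nat list"
  assumes "q > 1" and "0 < u" and "u < 1" and "is_partition lam"
  shows "HL_measure N (\<lambda>i. u / q ^ (i + 1)) (\<lambda>j. 1 / q ^ j) (1 / q) lam =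
    (if length lam > N then 0 else
       u ^ sum_list lam * qpoch q (u / q) N * qpoch q (1 / q) N
         / qpoch q (1 / q) (N - conj_part lam 1)
       * (\<Prod>i\<in>{1..sum_list lam}.
            1 / (q ^ (conj_part lam i ^ 2) * qpoch q (1 / q) (mult lam i))))"
proof (cases "length lam > N")
  case True then show ?thesis unfolding HL_measure_def by simp
next
  case False
  then have lN: "length lam \<le> N" by simp
  define t where "t = 1 / q"
  have t0: "0 < t" and t1: "t < 1" using assms(1) by (simp_all add: t_def)
  have q0: "q \<noteq> 0" using assms(1) by simp
  have u0: "0 < u" and u1: "u < 1" using assms by simp_all
  have p: "is_partition lam" using assms by simp
  have s: "sorted (rev lam)" and nz: "0 \<notin> set lam" using p by (auto simp: is_partition_def)
  define l where "l = length lam"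
  define S where "S = sum_list lam"
  define P where "P = nl lam"
  define V where "V = (\<Prod>i\<in>set lam. vm t (mult lam i))"
  define PU where "PU = (\<Prod>i<N. 1 - u * t ^ (i + 1))"
  define B where "B = (\<Prod>k\<in>set lam. Qt t (count_list lam k))"
  have Vp: "V > 0" unfolding V_def by (rule prod_pos) (use vm_pos[OF t0 t1] in auto)
  have PUp: "PU > 0" unfolding PU_def
  proof (rule prod_pos)
    fix i
    have "t ^ (i + 1) \<le> 1" using t0 t1 by (intro power_le_one) simp_all
    then have "u * t ^ (i + 1) \<le> u" using u0 by (simp add: mult_left_le)
    then show "0 < 1 - u * t ^ (i + 1)" using u1 by simp
  qed
  have t_ne1: "t \<noteq> 1" using t1 by simp
  have x_eq: "(\<lambda>i. u / q ^ (i + 1)) = (\<lambda>i. u * t ^ (i + 1))"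
    by (simp add: t_def power_one_over)
  have y_eq: "(\<lambda>j. 1 / q ^ j) = (\<lambda>j. t ^ j)"
    by (simp add: t_def power_one_over)
  have hx: "HL_P N t lam (\<lambda>i. u * t ^ (i + 1)) = (u * t) ^ S * t ^ P * vm t N / (vm t (N - l) * V)"
    using HL_P_geom2[OF t0 t1, of "\<lambda>i. u * t ^ (i + 1)" "u * t" lam N] lN u0 t0
    by (simp add: S_def P_def vlam_def V_def l_def mult_ac)
  have hy: "HL_P_inf t lam (\<lambda>j. t ^ j) = t ^ P / ((1 - t) ^ l * V)"
    using HL_P_inf_geom[OF t0 t1, of "\<lambda>j. t ^ j" lam] by (simp add: P_def l_def V_def)
  have hb: "b_lam t lam = B"
    unfolding b_lam_eq[OF p] B_def by (rule count_prod) simp_all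
  have hc: "cauchy_Pi t (trunc_seq N (\<lambda>i. u * t ^ (i + 1))) (\<lambda>j. t ^ j) = 1 / PU"
    unfolding PU_def by (rule cauchy_geom[OF t0 t1 u0 u1])
  have B_eq: "B = (1 - t) ^ l * V"
  proof -
    have "B = (\<Prod>k\<in>set lam. (1 - t) ^ count_list lam k * vm t (count_list lam k))"
      unfolding B_def using Qt_vm[OF t_ne1] by simp
    also have "\<dots> = (1 - t) ^ (\<Sum>k\<in>set lam. count_list lam k) * V"
      by (simp add: prod.distrib power_sum V_def mult_def)
    also have "(\<Sum>k\<in>set lam. count_list lam k) = l"
      unfolding l_def by (rule sum_count_set) simp_all
    finally show ?thesis .
  qed
  have lhs: "HL_measure N (\<lambda>i. u / q ^ (i + 1)) (\<lambda>j. 1 / q ^ j) (1 / q) lam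
      = (u * t) ^ S * t ^ P * vm t N / (vm t (N - l) * V) * (t ^ P / ((1 - t) ^ l * V)) * B / (1 / PU)"
    unfolding HL_measure_def x_eq y_eq t_def[symmetric] using lN hx hy hb hc by simp
  have qu: "qpoch q (u / q) N = PU"
    unfolding qpoch_def PU_def t_def
    by (rule prod.cong[OF refl]) (simp add: power_one_over field_simps)
  have c1: "conj_part lam 1 = l"
  proof -
    have "\<forall>k\<in>set lam. 1 \<le> k" using nz by (metis less_one not_le)
    then show ?thesis unfolding conj_part_def l_def by (subst filter_True) auto
  qed
  have prodQ: "(\<Prod>i\<in>{1..S}. Qt t (mult lam i)) = B"
  proof -
    have sub: "set lam \<subseteq> {1..S}"
    proof
      fix k assume k: "k \<in> set lam"
      then have "k \<noteq> 0" using nz by metis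
      moreover have "k \<le> S" unfolding S_def using k by (simp add: member_le_sum_list)
      ultimately show "k \<in> {1..S}" by simp
    qed
    show ?thesis unfolding B_def mult_def
      by (rule prod.mono_neutral_left[symmetric]) (use sub in \<open>auto simp: Qt_def\<close>)
  qed
  have sq: "(\<Sum>i\<in>{1..S}. conj_part lam i ^ 2) = S + 2 * P"
    unfolding S_def P_def
    by (rule conj_sq[OF s]) (simp add: member_le_sum_list)
  have prodR: "(\<Prod>i\<in>{1..S}. 1 / (q ^ (conj_part lam i ^ 2) * qpoch q (1 / q) (mult lam i)))
      = t ^ (S + 2 * P) / B"
  proof -
    have "(\<Prod>i\<in>{1..S}. 1 / (q ^ (conj_part lam i ^ 2) * qpoch q (1 / q) (mult lam i)))
        = (\<Prod>i\<in>{1..S}. t ^ (conj_part lam i ^ 2) / Qt t (mult lam i))"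
      by (rule prod.cong[OF refl]) (simp add: qpoch_Qt[OF q0] t_def power_one_over)
    also have "\<dots> = (\<Prod>i\<in>{1..S}. t ^ (conj_part lam i ^ 2)) / (\<Prod>i\<in>{1..S}. Qt t (mult lam i))"
      by (rule prod_dividef)
    also have "(\<Prod>i\<in>{1..S}. t ^ (conj_part lam i ^ 2)) = t ^ (S + 2 * P)"
      unfolding sq[symmetric] by (rule power_sum[symmetric])
    finally show ?thesis using prodQ by simp
  qed
  have qq: "qpoch q (1 / q) N / qpoch q (1 / q) (N - l) = (1 - t) ^ l * vm t N / vm t (N - l)"
  proof -
    have N: "N = (N - l) + l" using lN l_def by simp
    have "qpoch q (1 / q) N / qpoch q (1 / q) (N - l)
        = ((1 - t) ^ (N - l) * (1 - t) ^ l * vm t N) / ((1 - t) ^ (N - l) * vm t (N - l))"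
      unfolding qpoch_Qt[OF q0] unfolding t_def[symmetric] Qt_vm[OF t_ne1]
      by (subst (1) N) (simp add: power_add)
    also have "\<dots> = (1 - t) ^ l * vm t N / vm t (N - l)"
      using t1 by (simp add: field_simps)
    finally show ?thesis .
  qed
  have rhs: "u ^ S * qpoch q (u / q) N * qpoch q (1 / q) N / qpoch q (1 / q) (N - conj_part lam 1)
       * (\<Prod>i\<in>{1..S}. 1 / (q ^ (conj_part lam i ^ 2) * qpoch q (1 / q) (mult lam i)))
     = u ^ S * PU * ((1 - t) ^ l * vm t N / vm t (N - l)) * (t ^ (S + 2 * P) / B)"
  proof -
    have e: "\<And>a b c d x :: real. a * b * c / d * x = a * b * (c / d) * x" by simp
    show ?thesis unfolding prodR c1 qu e qq ..
  qed
  have vN: "vm t (N - l) > 0" by (rule vm_pos[OF t0 t1])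
  have a0: "(1 - t) ^ l > 0" using t1 by simp
  have fin: "(u * t) ^ S * t ^ P * vm t N / (vm t (N - l) * V) * (t ^ P / ((1 - t) ^ l * V)) * B / (1 / PU)
      = u ^ S * PU * ((1 - t) ^ l * vm t N / vm t (N - l)) * (t ^ (S + 2 * P) / B)"
    unfolding B_eq power_add mult_2
    by (rule alg_final) (use Vp PUp vN a0 in \<open>metis less_irrefl\<close>)+
  show ?thesis using False lhs rhs fin unfolding S_def by simp
qed

end
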